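(* Let $A$ be a sparse matrix whose columns are partitioned into consecutive groups $Q_1,\dots,Q_K$, each of width at most $\Delta_W$ (a regular partition of width $\Delta_W$). Let $\tau\in(0,1]$. Let $G$ consist of rows $v_0,\dots,v_{h-1}$ of $A$, merged into one group by the 1-SA algorithm in this order using Jaccard similarity threshold $\tau$; that is, writing $\hat V_i\subseteq\{1,\dots,K\}$ for the support of the quotient row $\hat v_i$ and $P_{i}=\hat V_0\cup\dots\cup \hat V_i$, we have $\mathrm{jaccard}(P_{i-1},\hat V_i)=|P_{i-1}\cap \hat V_i|/|P_{i-1}\cup \hat V_i|\ge\tau$ for every $1\le i\le h-1$. Let $\lambda_0=|\hat V_0|$ be the number of nonzeros of the (quotient) first row and $\lambda=|P_{h-1}|$ the number of nonzeros of the final pattern. If $\lambda\le \lambda_0/(1-\tau/2)$, then the density $\rho_G$ of $G$ after removing empty columns is at least $\tau/(2\Delta_W)$.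
   Context: Quotient row: given the column partition $Q=\{Q_1,\dots,Q_K\}$, the $Q$-quotient of a row $v$ is the binary vector $\hat v\in\{0,1\}^K$ with $\hat v_j=1$ iff $v$ has at least one nonzero entry in a column of $Q_j$. The 1-SA algorithm processes rows in order; when it meets a row not yet assigned to a group it opens a new group whose pattern is that row's quotient; it then scans later unassigned rows and, whenever the merge condition holds between the current pattern and a row's quotient, assigns the row to the group and replaces the pattern by the bitwise OR of the pattern and the row's quotient. Here the merge condition includes that the Jaccard similarity (of supports) between the current pattern and the new quotient row is at least $\tau$. Density of $G$ after removing empty columns: let $C$ be the union of the column groups $Q_j$ with $j\in P_{h-1}$; $\rho_G$ is the number of nonzero entries of $A$ in rows $v_0,\dots,v_{h-1}$ and columns in $C$, divided by $h\cdot|C|$. (For $\Delta_W=1$ this is the density of the $h\times\lambda$ submatrix on the columns containing at least one nonzero of the group.) *)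

theory Defs
  imports Complex_Main
begin

definition consecutive_partition :: "nat \<Rightarrow> nat \<Rightarrow> nat \<Rightarrow> (nat \<Rightarrow> nat) \<Rightarrow> bool" where
  "consecutive_partition n K W b \<longleftrightarrow>
     b 0 = 0 \<and> b K = n \<and> (\<forall>j<K. b j < b (Suc j) \<and> b (Suc j) - b j \<le> W)"

definition colgroup :: "(nat \<Rightarrow> nat) \<Rightarrow> nat \<Rightarrow> nat set" where
  "colgroup b j = {b j ..< b (Suc j)}"

definition quot_supp :: "nat \<Rightarrow> (nat \<Rightarrow> nat) \<Rightarrow> (nat \<Rightarrow> real) \<Rightarrow> nat set" where
  "quot_supp K b row = {j. j < K \<and> (\<exists>c\<in>colgroup b j. row c \<noteq> 0)}"

definition jaccard :: "nat set \<Rightarrow> nat set \<Rightarrow> real" where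
  "jaccard X Y = real (card (X \<inter> Y)) / real (card (X \<union> Y))"

definition pattern :: "nat \<Rightarrow> (nat \<Rightarrow> nat) \<Rightarrow> (nat \<Rightarrow> nat \<Rightarrow> real) \<Rightarrow> nat \<Rightarrow> nat set" where
  "pattern K b v i = (\<Union>k\<le>i. quot_supp K b (v k))"

text \<open>Columns of the group G (rows v 0..v (h-1)) after removing empty columns.\<close>
definition group_cols :: "nat \<Rightarrow> (nat \<Rightarrow> nat) \<Rightarrow> (nat \<Rightarrow> nat \<Rightarrow> real) \<Rightarrow> nat \<Rightarrow> nat set" where
  "group_cols K b v h = (\<Union>j\<in>pattern K b v (h - 1). colgroup b j)"

definition group_density :: "nat \<Rightarrow> (nat \<Rightarrow> nat) \<Rightarrow> (nat \<Rightarrow> nat \<Rightarrow> real) \<Rightarrow> nat \<Rightarrow> real" where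
  "group_density K b v h =
     real (card {(i, c). i < h \<and> c \<in> group_cols K b v h \<and> v i c \<noteq> 0})
     / (real h * real (card (group_cols K b v h)))"

end

theory Submission
  imports Defs
begin

lemma part_mono:
  assumes "consecutive_partition n K W b" "j < j'" "j' \<le> K"
  shows "b (Suc j) \<le> b j'"
  using assms(2,3)
proof (induction j' rule: less_induct)
  case (less x)
  then obtain y where y: "x = Suc y" by (cases x) auto
  show ?case
  proof (cases "y = j")
    case True then show ?thesis using y by simp
  next
    case False
    then have "j < y" using less y by simp
    then have "b (Suc j) \<le> b y" using less y by simp
    also have "b y < b x" using assms(1) less y unfolding consecutive_partition_def by auto
    finally show ?thesis by simp
  qed
qed

lemma colgroup_unique:
  assumes "consecutive_partition n K W b" "j < K" "j' < K"
    "c \<in> colgroup b j" "c \<in> colgroup b j'"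
  shows "j = j'"
proof (rule ccontr)
  assume "j \<noteq> j'"
  then consider "j < j'" | "j' < j" by linarith
  then show False
  proof cases
    case 1
    then have "b (Suc j) \<le> b j'" using part_mono[OF assms(1)] assms by simp
    then show False using assms(4,5) unfolding colgroup_def by auto
  next
    case 2
    then have "b (Suc j') \<le> b j" using part_mono[OF assms(1)] assms by simp
    then show False using assms(4,5) unfolding colgroup_def by auto
  qed
qed

theorem theorem1:
  fixes A :: "nat \<Rightarrow> nat \<Rightarrow> real" and m n K W h :: nat
    and b r :: "nat \<Rightarrow> nat" and \<tau> :: real
  assumes matrix: "\<forall>i c. n \<le> c \<longrightarrow> A i c = 0"
    and part: "consecutive_partition n K W b"
    and tau: "0 < \<tau>" "\<tau> \<le> 1"
    and h: "1 \<le> h"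
    and rows: "\<forall>i<h. r i < m" "\<forall>i. Suc i < h \<longrightarrow> r i < r (Suc i)"
    and merge: "\<forall>i. 1 \<le> i \<and> i \<le> h - 1 \<longrightarrow>
       jaccard (pattern K b (\<lambda>k. A (r k)) (i - 1)) (quot_supp K b (A (r i))) \<ge> \<tau>"
    and nonempty: "quot_supp K b (A (r 0)) \<noteq> {}"
    and lam: "real (card (pattern K b (\<lambda>k. A (r k)) (h - 1)))
              \<le> real (card (quot_supp K b (A (r 0)))) / (1 - \<tau> / 2)"
  shows "group_density K b (\<lambda>k. A (r k)) h \<ge> \<tau> / (2 * real W)"
proof -
  define v where "v = (\<lambda>k. A (r k))"
  define V where "V = (\<lambda>i. quot_supp K b (v i))"
  define P where "P = pattern K b v"
  define C where "C = group_cols K b v h"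
  define lam where "lam = card (P (h - 1))"
  define lam0 where "lam0 = card (V 0)"
  have Vsub: "V i \<subseteq> {..<K}" for i unfolding V_def quot_supp_def by auto
  have Psub: "P i \<subseteq> {..<K}" for i using Vsub unfolding P_def pattern_def V_def by blast
  have finV: "finite (V i)" for i using Vsub finite_subset by blast
  have finP: "finite (P i)" for i using Psub finite_subset by blast
  have PV: "V k \<subseteq> P i" if "k \<le> i" for k i using that unfolding P_def pattern_def V_def by blast
  have Pmono: "P k \<subseteq> P i" if "k \<le> i" for k i using that unfolding P_def pattern_def by (simp add: SUP_subset_mono)
  have Psuc: "P i = P (i - 1) \<union> V i" if "1 \<le> i" for i
  proof -
    have "{..i} = insert i {..i-1}" using that by auto
    then show ?thesis unfolding P_def pattern_def V_def by auto
  qed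
  have lam0pos: "lam0 > 0" unfolding lam0_def using nonempty finV V_def v_def by (simp add: card_gt_0_iff)
  have lamge: "lam0 \<le> lam" unfolding lam0_def lam_def using PV[of 0 "h-1"] finP card_mono by auto
  have lampos: "lam > 0" using lam0pos lamge by simp
  have lamb: "real lam0 \<ge> (1 - \<tau>/2) * real lam"
  proof -
    have "real lam \<le> real lam0 / (1 - \<tau>/2)" using lam unfolding lam_def lam0_def P_def V_def v_def .
    moreover have "1 - \<tau>/2 > 0" using tau by simp
    ultimately show ?thesis by (simp add: field_simps)
  qed
  have Vbound: "real (card (V i)) \<ge> \<tau> * real lam / 2" if "i < h" for i
  proof (cases "i = 0")
    case True
    have e: "(1 - \<tau>/2) * real lam - \<tau> * real lam / 2 = (1 - \<tau>) * real lam"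
      by (simp add: algebra_simps)
    have "(1 - \<tau>) * real lam \<ge> 0" using tau by simp
    then show ?thesis using lamb e unfolding lam0_def True by linarith
  next
    case False
    then have i1: "1 \<le> i" "i \<le> h - 1" using that by auto
    have j: "jaccard (P (i-1)) (V i) \<ge> \<tau>" using merge i1 unfolding P_def V_def v_def by auto
    have "V 0 \<subseteq> P (i-1)" using PV by simp
    then have ne: "card (P (i-1) \<union> V i) > 0" using nonempty finP finV unfolding V_def v_def
      by (metis Un_empty card_gt_0_iff finite_UnI le_iff_sup)
    have "\<tau> * real (card (P (i-1) \<union> V i)) \<le> real (card (P (i-1) \<inter> V i))"
      using j ne unfolding jaccard_def by (simp add: field_simps)
    moreover have "card (P (i-1) \<inter> V i) \<le> card (V i)" using finV by (simp add: card_mono)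
    moreover have "card (V 0) \<le> card (P (i-1) \<union> V i)"
      using \<open>V 0 \<subseteq> P (i-1)\<close> finP finV by (meson card_mono finite_UnI le_supI1)
    ultimately have "real (card (V i)) \<ge> \<tau> * real lam0"
      unfolding lam0_def using tau
      by (smt (verit) mult_left_mono of_nat_le_iff)
    moreover have "\<tau> * real lam0 \<ge> \<tau> * ((1 - \<tau>/2) * real lam)" using lamb tau by simp
    moreover have "(1 - \<tau>/2) * real lam \<ge> real lam / 2" using tau
      by (simp add: field_simps mult_left_le_one_le)
    then have "\<tau> * (real lam / 2) \<le> \<tau> * ((1 - \<tau>/2) * real lam)"
      using tau by (intro mult_left_mono) auto
    ultimately show ?thesis by linarith
  qed
  define S where "S = (\<lambda>i. {c. c \<in> C \<and> v i c \<noteq> 0})"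
  have Cdef: "C = (\<Union>j\<in>P (h-1). colgroup b j)" unfolding C_def group_cols_def P_def by simp
  have finC: "finite C" unfolding Cdef using finP unfolding colgroup_def by auto
  have Seq: "{(i, c). i < h \<and> c \<in> C \<and> v i c \<noteq> 0} = Sigma {..<h} S" unfolding S_def by auto
  have Sge: "card (V i) \<le> card (S i)" if "i < h" for i
  proof -
    define f where "f = (\<lambda>j. SOME c. c \<in> colgroup b j \<and> v i c \<noteq> 0)"
    have fp: "f j \<in> colgroup b j \<and> v i (f j) \<noteq> 0" if "j \<in> V i" for j
      using that unfolding f_def V_def quot_supp_def by (metis (mono_tags, lifting) mem_Collect_eq someI_ex)
    have "inj_on f (V i)"
    proof (rule inj_onI)
      fix x y assume "x \<in> V i" "y \<in> V i" "f x = f y"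
      then show "x = y" using colgroup_unique[OF part] fp Vsub by (metis lessThan_iff subsetD)
    qed
    moreover have "f ` V i \<subseteq> S i"
    proof
      fix c assume "c \<in> f ` V i"
      then obtain j where "j \<in> V i" "c = f j" by auto
      moreover have "j \<in> P (h-1)" proof -
        have "i \<le> h - 1" using that by simp
        then show ?thesis using PV[of i "h-1"] \<open>j \<in> V i\<close> by blast
      qed
      ultimately show "c \<in> S i" using fp unfolding S_def Cdef by auto
    qed
    ultimately show ?thesis using finC unfolding S_def by (intro card_inj_on_le) auto
  qed
  have finS: "finite (S i)" for i using finC unfolding S_def by auto
  have N: "real (card {(i, c). i < h \<and> c \<in> C \<and> v i c \<noteq> 0}) \<ge> real h * (\<tau> * real lam / 2)"
  proof -
    have "real (card {(i, c). i < h \<and> c \<in> C \<and> v i c \<noteq> 0}) = (\<Sum>i<h. real (card (S i)))"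
      unfolding Seq using finS by (simp add: card_SigmaI)
    also have "\<dots> \<ge> (\<Sum>i<h. \<tau> * real lam / 2)"
      using Sge Vbound by (intro sum_mono) (smt (verit) lessThan_iff of_nat_le_iff)
    finally show ?thesis by simp
  qed
  have Ccard: "card C \<le> W * lam"
  proof -
    have "card C \<le> (\<Sum>j\<in>P (h-1). card (colgroup b j))" unfolding Cdef using card_UN_le finP by blast
    also have "\<dots> \<le> (\<Sum>j\<in>P (h-1). W)"
    proof (intro sum_mono)
      fix j assume "j \<in> P (h-1)"
      then have "j < K" using Psub by auto
      then show "card (colgroup b j) \<le> W" using part unfolding consecutive_partition_def colgroup_def by auto
    qed
    finally show ?thesis unfolding lam_def by (simp add: mult.commute)
  qed
  have Cpos: "card C > 0"
  proof -
    obtain j where j: "j \<in> P (h-1)" using lampos unfolding lam_def by (metis card.empty ex_in_conv less_irrefl)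
    then have "j < K" using Psub by auto
    then have "b j \<in> colgroup b j" using part unfolding consecutive_partition_def colgroup_def by auto
    then have "C \<noteq> {}" using j unfolding Cdef by auto
    then show ?thesis using finC by (simp add: card_gt_0_iff)
  qed
  have Wpos: "W > 0" using Ccard Cpos by (metis mult_is_0 not_gr_zero le_zero_eq)
  have hpos: "real h > 0" using h by simp
  have "\<tau> / (2 * real W) = (real h * (\<tau> * real lam / 2)) / (real h * (real W * real lam))"
    using hpos lampos Wpos by (simp add: field_simps)
  also have "\<dots> \<le> real (card {(i, c). i < h \<and> c \<in> C \<and> v i c \<noteq> 0}) / (real h * (real W * real lam))"
    using N hpos lampos Wpos by (intro divide_right_mono) auto
  also have "\<dots> \<le> real (card {(i, c). i < h \<and> c \<in> C \<and> v i c \<noteq> 0}) / (real h * real (card C))"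
  proof (intro divide_left_mono)
    show "real h * real (card C) \<le> real h * (real W * real lam)"
      using Ccard hpos by (metis mult_left_mono of_nat_le_iff of_nat_mult less_imp_le)
    show "0 < real h * (real W * real lam) * (real h * real (card C))"
      using hpos lampos Wpos Cpos by simp
  qed simp
  finally show ?thesis unfolding group_density_def C_def v_def .
qed

end
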